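(* Let $\theta\mapsto K_m(\theta)\in\mathbb{C}^{D\times D}$, $m=0,\dots,d-1$, be differentiable with $\sum_mK_m^\dagger K_m=\mathbb{1}_D$, fix $\theta_0$, and suppose the HKS condition $i\sum_mK_m^\dagger\partial_\theta K_m\in\mathrm{span}\{K_i^\dagger K_j\}$ holds at $\theta_0$. Let $h\in\mathbb{C}^{d\times d}$ be a Hermitian matrix such that the isometry $W_\theta=(\mathbb{1}_D\otimes e^{-i\theta h})V_\theta$ (where $V_\theta=\sum_mK_m(\theta)\otimes|m\rangle$) satisfies $\sum_mW_m(\theta_0)^\dagger\partial_\theta W_m(\theta_0)=0$. Let $\rho_{ss}$ be a fixed point of $\mathcal{E}(X)=\sum_mK_mXK_m^\dagger$ at $\theta_0$, let $|\psi_V\rangle=|\Phi^V_T\rangle$ and $|\psi_W\rangle=|\Phi^W_T\rangle$ be the $T$-site states (defined in the context), and let $H=\sum_{\tau=1}^Th_\tau$ where $h_\tau$ is $h$ acting on the $\tau$-th radiation qudit. Then $|\psi_V(\theta)\rangle=e^{i\theta H}|\psi_W(\theta)\rangle$ and the quantum Fisher information of $\psi_V$ at $\theta_0$ is $$F[\psi_V]=4\,\mathrm{Var}_{\psi_W}[H]+4T\alpha^W+8\,\mathrm{Im}\,\langle\psi_W|H|\dot\psi_W\rangle,$$ where $\alpha^W=\sum_m\mathrm{Tr}(\dot W_m\rho_{ss}\dot W_m^\dagger)$ and $\mathrm{Var}_{\psi_W}[H]=\langle\psi_W|H^2|\psi_W\rangle-\langle\psi_W|H|\psi_W\rangle^2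$.
   Context: Dots denote $\partial_\theta$ at $\theta_0$. For $X=\sum_mX_m\otimes|m\rangle$, $|\Phi^X_T(\theta)\rangle=\sum_{\mathbf{m}}(\mathbb{1}_A\otimes X_{m_T}(\theta)\cdots X_{m_1}(\theta))|\xi\rangle\otimes|m_1\cdots m_T\rangle$ with $|\xi\rangle\in\mathbb{C}^D_A\otimes\mathbb{C}^D_S$ a fixed $\theta$-independent purification of $\rho_{ss}$. Pure-state QFI is $4(\langle\dot\psi|\dot\psi\rangle-|\langle\dot\psi|\psi\rangle|^2)$. *)

theory Defs
  imports "HOL-Analysis.Analysis"
begin

text \<open>Matrices/operators on a finite index carrier are functions 'i => 'i => complex,
  vectors are functions 'i => complex; sums run over an explicit carrier set I.\<close>

definition mmult :: "'i set \<Rightarrow> ('i \<Rightarrow> 'i \<Rightarrow> complex) \<Rightarrow> ('i \<Rightarrow> 'i \<Rightarrow> complex) \<Rightarrow> 'i \<Rightarrow> 'i \<Rightarrow> complex" where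
  "mmult I A B = (\<lambda>x y. \<Sum>z\<in>I. A x z * B z y)"

definition mone :: "'i \<Rightarrow> 'i \<Rightarrow> complex" where
  "mone = (\<lambda>x y. if x = y then 1 else 0)"

primrec mpow :: "'i set \<Rightarrow> ('i \<Rightarrow> 'i \<Rightarrow> complex) \<Rightarrow> nat \<Rightarrow> 'i \<Rightarrow> 'i \<Rightarrow> complex" where
  "mpow I A 0 = mone"
| "mpow I A (Suc n) = mmult I (mpow I A n) A"

definition mexp :: "'i set \<Rightarrow> ('i \<Rightarrow> 'i \<Rightarrow> complex) \<Rightarrow> 'i \<Rightarrow> 'i \<Rightarrow> complex" where
  "mexp I A = (\<lambda>x y. \<Sum>n. mpow I A n x y / of_nat (fact n))"

definition mvec :: "'i set \<Rightarrow> ('i \<Rightarrow> 'i \<Rightarrow> complex) \<Rightarrow> ('i \<Rightarrow> complex) \<Rightarrow> 'i \<Rightarrow> complex" where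
  "mvec I A v = (\<lambda>x. \<Sum>y\<in>I. A x y * v y)"

definition adj :: "('i \<Rightarrow> 'i \<Rightarrow> complex) \<Rightarrow> 'i \<Rightarrow> 'i \<Rightarrow> complex" where
  "adj A = (\<lambda>x y. cnj (A y x))"

definition inner_c :: "'i set \<Rightarrow> ('i \<Rightarrow> complex) \<Rightarrow> ('i \<Rightarrow> complex) \<Rightarrow> complex" where
  "inner_c I u v = (\<Sum>x\<in>I. cnj (u x) * v x)"

definition mtrace :: "('i::finite \<Rightarrow> 'i \<Rightarrow> complex) \<Rightarrow> complex" where
  "mtrace A = (\<Sum>x\<in>UNIV. A x x)"

definition mderiv :: "(real \<Rightarrow> 'i \<Rightarrow> 'j \<Rightarrow> complex) \<Rightarrow> real \<Rightarrow> 'i \<Rightarrow> 'j \<Rightarrow> complex" where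
  "mderiv A t = (\<lambda>x y. vector_derivative (\<lambda>s. A s x y) (at t))"

definition vderiv :: "(real \<Rightarrow> 'i \<Rightarrow> complex) \<Rightarrow> real \<Rightarrow> 'i \<Rightarrow> complex" where
  "vderiv v t = (\<lambda>x. vector_derivative (\<lambda>s. v s x) (at t))"

definition QFI :: "'i set \<Rightarrow> (real \<Rightarrow> 'i \<Rightarrow> complex) \<Rightarrow> real \<Rightarrow> real" where
  "QFI I psi t0 = 4 * (Re (inner_c I (vderiv psi t0) (vderiv psi t0))
                      - (cmod (inner_c I (vderiv psi t0) (psi t0)))\<^sup>2)"

text \<open>Ordered product X_{m_T} ... X_{m_1} for the word [m_1, ..., m_T].\<close>
primrec wprod :: "('m \<Rightarrow> 'd::finite \<Rightarrow> 'd \<Rightarrow> complex) \<Rightarrow> 'm list \<Rightarrow> 'd \<Rightarrow> 'd \<Rightarrow> complex" where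
  "wprod X [] = mone"
| "wprod X (m # ms) = mmult UNIV (wprod X ms) (X m)"

text \<open>Index set of C^D_A (x) C^D_S (x) (C^d)^{(x) T}.\<close>
definition carrierT :: "nat \<Rightarrow> ('d \<times> 'd \<times> 'm list) set" where
  "carrierT T = UNIV \<times> UNIV \<times> {ms. length ms = T}"

text \<open>The T-site state |Phi^X_T(theta)>, xi indexed by (ancilla, system).\<close>
definition PhiT :: "(real \<Rightarrow> 'm \<Rightarrow> 'd::finite \<Rightarrow> 'd \<Rightarrow> complex) \<Rightarrow> ('d \<times> 'd \<Rightarrow> complex)
                   \<Rightarrow> nat \<Rightarrow> real \<Rightarrow> 'd \<times> 'd \<times> 'm list \<Rightarrow> complex" where
  "PhiT X xi T th = (\<lambda>(a, s, ms). if length ms = T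
       then (\<Sum>s'\<in>UNIV. wprod (X th) ms s s' * xi (a, s')) else 0)"

text \<open>W_m(theta) = sum_{m'} (e^{-i theta h})_{m m'} K_{m'}(theta), i.e. W = (1 (x) e^{-i theta h}) V.\<close>
definition Wop :: "(real \<Rightarrow> 'm::finite \<Rightarrow> 'd \<Rightarrow> 'd \<Rightarrow> complex) \<Rightarrow> ('m \<Rightarrow> 'm \<Rightarrow> complex)
                   \<Rightarrow> real \<Rightarrow> 'm \<Rightarrow> 'd \<Rightarrow> 'd \<Rightarrow> complex" where
  "Wop K h th = (\<lambda>m i j. \<Sum>m'\<in>UNIV. mexp UNIV (\<lambda>a b. - \<i> * of_real th * h a b) m m' * K th m' i j)"

text \<open>h acting on the radiation qudit at (0-based) position tau.\<close>
definition hsite :: "('m \<Rightarrow> 'm \<Rightarrow> complex) \<Rightarrow> nat \<Rightarrow> 'd \<times> 'd \<times> 'm list \<Rightarrow> 'd \<times> 'd \<times> 'm list \<Rightarrow> complex" where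
  "hsite h tau = (\<lambda>(a, s, ms) (a', s', ms').
     if a = a' \<and> s = s' \<and> length ms = length ms' \<and> tau < length ms
        \<and> (\<forall>k<length ms. k \<noteq> tau \<longrightarrow> ms ! k = ms' ! k)
     then h (ms ! tau) (ms' ! tau) else 0)"

definition Htot :: "('m \<Rightarrow> 'm \<Rightarrow> complex) \<Rightarrow> nat \<Rightarrow> 'd \<times> 'd \<times> 'm list \<Rightarrow> 'd \<times> 'd \<times> 'm list \<Rightarrow> complex" where
  "Htot h T = (\<lambda>x y. \<Sum>tau<T. hsite h tau x y)"

end

theory Submission
  imports Defs
begin


definition madd :: "('i \<Rightarrow> 'j \<Rightarrow> complex) \<Rightarrow> ('i \<Rightarrow> 'j \<Rightarrow> complex) \<Rightarrow> 'i \<Rightarrow> 'j \<Rightarrow> complex" where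
  "madd A B = (\<lambda>i j. A i j + B i j)"

definition msum :: "'k set \<Rightarrow> ('k \<Rightarrow> 'i \<Rightarrow> 'j \<Rightarrow> complex) \<Rightarrow> 'i \<Rightarrow> 'j \<Rightarrow> complex" where
  "msum S f = (\<lambda>i j. \<Sum>k\<in>S. f k i j)"

lemma mmult_assoc: "finite I \<Longrightarrow> mmult I (mmult I A B) C = mmult I A (mmult I B C)"
  unfolding mmult_def
  by (auto simp: sum_distrib_left sum_distrib_right mult.assoc intro!: ext sum.swap[THEN trans])

lemma mmult_madd_left: "mmult I (madd A B) C = madd (mmult I A C) (mmult I B C)"
  by (auto simp: mmult_def madd_def sum.distrib algebra_simps intro!: ext)
lemma mmult_madd_right: "mmult I C (madd A B) = madd (mmult I C A) (mmult I C B)"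
  by (auto simp: mmult_def madd_def sum.distrib algebra_simps intro!: ext)
lemma mmult_msum_left: "finite S \<Longrightarrow> mmult I (msum S f) C = msum S (\<lambda>k. mmult I (f k) C)"
  by (auto simp: mmult_def msum_def sum_distrib_right intro!: ext sum.swap)
lemma mmult_msum_right: "finite S \<Longrightarrow> mmult I C (msum S f) = msum S (\<lambda>k. mmult I C (f k))"
  by (auto simp: mmult_def msum_def sum_distrib_left intro!: ext sum.swap)
lemma adj_mmult: "adj (mmult I A B) = mmult I (adj B) (adj A)"
  by (auto simp: mmult_def adj_def mult.commute intro!: ext)
lemma adj_adj[simp]: "adj (adj A) = A"
  by (auto simp: adj_def)
lemma adj_madd: "adj (madd A B) = madd (adj A) (adj B)"
  by (auto simp: madd_def adj_def)
lemma adj_msum: "adj (msum S f) = msum S (\<lambda>k. adj (f k))"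
  by (auto simp: msum_def adj_def)
lemma mmult_zero_left[simp]: "mmult I (\<lambda>i j. 0) A = (\<lambda>i j. 0)"
  by (auto simp: mmult_def)
lemma mmult_zero_right[simp]: "mmult I A (\<lambda>i j. 0) = (\<lambda>i j. 0)"
  by (auto simp: mmult_def)
lemma adj_zero[simp]: "adj (\<lambda>i j. 0) = (\<lambda>i j. 0)"
  by (auto simp: adj_def)
lemma sum_delta_mult1: "finite I \<Longrightarrow> x \<in> I \<Longrightarrow> (\<Sum>z\<in>I. (if x = z then 1 else 0) * f z) = (f x::complex)"
proof -
  assume "finite I" "x \<in> I"
  have "(\<Sum>z\<in>I. (if x = z then 1 else 0) * f z) = (\<Sum>z\<in>I. if x = z then f z else 0)"
    by (rule sum.cong) auto
  then show ?thesis using \<open>finite I\<close> \<open>x \<in> I\<close> by simp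
qed
lemma sum_delta_mult2: "finite I \<Longrightarrow> x \<in> I \<Longrightarrow> (\<Sum>z\<in>I. f z * (if z = x then 1 else 0)) = (f x::complex)"
proof -
  assume "finite I" "x \<in> I"
  have "(\<Sum>z\<in>I. f z * (if z = x then 1 else 0)) = (\<Sum>z\<in>I. if x = z then f z else 0)"
    by (rule sum.cong) auto
  then show ?thesis using \<open>finite I\<close> \<open>x \<in> I\<close> by simp
qed

lemma mmult_mone_left: "x \<in> I \<Longrightarrow> finite I \<Longrightarrow> mmult I mone A x y = A x y"
  unfolding mmult_def mone_def by (simp add: sum_delta_mult1)
lemma mmult_mone_right: "y \<in> I \<Longrightarrow> finite I \<Longrightarrow> mmult I A mone x y = A x y"
  unfolding mmult_def mone_def by (simp add: sum_delta_mult2)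
lemma mmult_mone_UNIV_left[simp]: "mmult (UNIV::'a::finite set) mone A = A"
  by (auto intro!: ext mmult_mone_left)
lemma mmult_mone_UNIV_right[simp]: "mmult (UNIV::'a::finite set) A mone = A"
  by (auto intro!: ext mmult_mone_right)
lemma adj_mone[simp]: "adj mone = mone"
  by (auto simp: adj_def mone_def intro!: ext)
lemma mvec_mvec: "finite I \<Longrightarrow> mvec I A (mvec I B v) = mvec I (mmult I A B) v"
  unfolding mvec_def mmult_def
  by (auto simp: sum_distrib_left sum_distrib_right mult.assoc intro!: ext sum.swap[THEN trans])
lemma mvec_mone: "x \<in> I \<Longrightarrow> finite I \<Longrightarrow> mvec I mone v x = v x"
  unfolding mvec_def mone_def by (simp add: sum_delta_mult1)

lemma inner_c_mvec: "finite I \<Longrightarrow> inner_c I (mvec I A u) v = inner_c I u (mvec I (adj A) v)"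
  unfolding inner_c_def mvec_def adj_def
  by (auto simp: sum_distrib_left sum_distrib_right mult_ac intro!: sum.swap[THEN trans])

lemma inner_c_cnj: "cnj (inner_c I u v) = inner_c I v u"
  by (simp add: inner_c_def mult.commute)

lemma inner_c_self_real: "Im (inner_c I v v) = 0"
  by (simp add: inner_c_def)

lemma inner_c_cong: "(\<And>x. x \<in> I \<Longrightarrow> u x = u' x) \<Longrightarrow> (\<And>x. x \<in> I \<Longrightarrow> v x = v' x) \<Longrightarrow>
   inner_c I u v = inner_c I u' v'"
  by (simp add: inner_c_def)

lemma mvec_cong: "(\<And>y. y \<in> I \<Longrightarrow> v y = v' y) \<Longrightarrow> mvec I A v x = mvec I A v' x"
  by (simp add: mvec_def)

lemma unitary_inner:
  assumes "finite I" "\<And>x y. x \<in> I \<Longrightarrow> y \<in> I \<Longrightarrow> mmult I (adj U) U x y = mone x y"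
  shows "inner_c I (mvec I U u) (mvec I U v) = inner_c I u v"
proof -
  have "inner_c I (mvec I U u) (mvec I U v) = inner_c I u (mvec I (adj U) (mvec I U v))"
    using assms(1) by (rule inner_c_mvec)
  also have "\<dots> = inner_c I u (mvec I (mmult I (adj U) U) v)"
    using assms(1) by (simp add: mvec_mvec)
  also have "\<dots> = inner_c I u (mvec I mone v)"
    using assms by (intro inner_c_cong) (auto simp: mvec_def)
  also have "\<dots> = inner_c I u v"
    using assms by (intro inner_c_cong) (auto simp: mvec_mone)
  finally show ?thesis .
qed



lemma mpow_bound:
  assumes "finite I"
  shows "\<exists>N\<ge>0. \<forall>n. cmod (mpow I A n x y) \<le> N ^ n"
proof -
  define N where "N = 1 + (\<Sum>a\<in>I. \<Sum>b\<in>insert y I. cmod (A a b))"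
  have N0: "N \<ge> 1" unfolding N_def by (simp add: sum_nonneg)
  have colb: "(\<Sum>w\<in>I. cmod (A w z)) \<le> N" if "z \<in> insert y I" for z
  proof -
    have "(\<Sum>w\<in>I. cmod (A w z)) \<le> (\<Sum>w\<in>I. \<Sum>b\<in>insert y I. cmod (A w b))"
      using that assms by (intro sum_mono member_le_sum) auto
    then show ?thesis unfolding N_def by simp
  qed
  have "\<forall>z\<in>insert y I. cmod (mpow I A n x z) \<le> N ^ n" for n
  proof (induction n)
    case 0
    then show ?case by (auto simp: mone_def)
  next
    case (Suc n)
    show ?case
    proof
      fix z assume z: "z \<in> insert y I"
      have "cmod (mpow I A (Suc n) x z) = cmod (\<Sum>w\<in>I. mpow I A n x w * A w z)"
        by (simp add: mmult_def)
      also have "\<dots> \<le> (\<Sum>w\<in>I. cmod (mpow I A n x w) * cmod (A w z))"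
        by (rule order_trans[OF norm_sum]) (simp add: norm_mult)
      also have "\<dots> \<le> (\<Sum>w\<in>I. N ^ n * cmod (A w z))"
        using Suc.IH by (intro sum_mono mult_right_mono) auto
      also have "\<dots> = N ^ n * (\<Sum>w\<in>I. cmod (A w z))"
        by (simp add: sum_distrib_left)
      also have "\<dots> \<le> N ^ n * N"
        using colb[OF z] N0 by (intro mult_left_mono) auto
      finally show "cmod (mpow I A (Suc n) x z) \<le> N ^ Suc n"
        by (simp add: mult.commute)
    qed
  qed
  then show ?thesis using N0 by (intro exI[of _ N]) auto
qed

lemma mexp_coeff_summable:
  assumes "finite I"
  shows "summable (\<lambda>n. mpow I A n x y / of_nat (fact n) * z ^ n)"
proof -
  obtain N where N: "N \<ge> 0" "\<And>n. cmod (mpow I A n x y) \<le> N ^ n"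
    using mpow_bound[OF assms] by blast
  show ?thesis
  proof (rule summable_comparison_test')
    show "summable (\<lambda>n. inverse (fact n) * (N * cmod z) ^ n)"
      by (rule summable_exp)
    fix n :: nat
    have "cmod (mpow I A n x y / of_nat (fact n) * z ^ n)
        = cmod (mpow I A n x y) * cmod z ^ n / fact n"
      by (simp add: norm_mult norm_divide norm_power)
    also have "\<dots> \<le> N ^ n * cmod z ^ n / fact n"
      using N by (intro divide_right_mono mult_right_mono) auto
    also have "\<dots> = inverse (fact n) * (N * cmod z) ^ n"
      by (simp add: power_mult_distrib field_simps)
    finally show "norm (mpow I A n x y / of_nat (fact n) * z ^ n) \<le> inverse (fact n) * (N * cmod z) ^ n" .
  qed
qed

lemma mexp_summable:
  assumes "finite I"
  shows "summable (\<lambda>n. mpow I A n x y / of_nat (fact n))"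
  using mexp_coeff_summable[OF assms, of A x y 1] by simp

lemma mpow_scale: "mpow I (\<lambda>a b. z * A a b) n = (\<lambda>a b. z ^ n * mpow I A n a b)"
  by (induction n) (auto simp: mone_def mmult_def sum_distrib_left mult_ac intro!: ext)

lemma mexp_scale: "mexp I (\<lambda>a b. z * A a b) x y = (\<Sum>n. mpow I A n x y / of_nat (fact n) * z ^ n)"
  by (simp add: mexp_def mpow_scale mult_ac)

lemma mexp_zero_scale: "mexp I (\<lambda>a b. 0 * A a b) x y = mone x y"
proof -
  have "mexp I (\<lambda>a b. 0 * A a b) x y = (\<Sum>n. mpow I A n x y / of_nat (fact n) * 0 ^ n)"
    by (rule mexp_scale)
  also have "\<dots> = mone x y" by (subst powser_zero) simp
  finally show ?thesis .
qed

lemma mmult_suminf_right: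
  assumes "finite I" "\<And>w. w \<in> I \<Longrightarrow> summable (\<lambda>n. f n x w)"
  shows "mmult I (\<lambda>a b. \<Sum>n. f n a b) B x y = (\<Sum>n. mmult I (f n) B x y)"
proof -
  have "mmult I (\<lambda>a b. \<Sum>n. f n a b) B x y = (\<Sum>w\<in>I. (\<Sum>n. f n x w) * B w y)"
    by (simp add: mmult_def)
  also have "\<dots> = (\<Sum>w\<in>I. \<Sum>n. f n x w * B w y)"
    using assms by (intro sum.cong refl suminf_mult2) auto
  also have "\<dots> = (\<Sum>n. \<Sum>w\<in>I. f n x w * B w y)"
    using assms by (intro suminf_sum[symmetric] summable_mult2) auto
  finally show ?thesis by (simp add: mmult_def)
qed

lemma mmult_suminf_left:
  assumes "finite I" "\<And>w. w \<in> I \<Longrightarrow> summable (\<lambda>n. f n w y)"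
  shows "mmult I B (\<lambda>a b. \<Sum>n. f n a b) x y = (\<Sum>n. mmult I B (f n) x y)"
proof -
  have "mmult I B (\<lambda>a b. \<Sum>n. f n a b) x y = (\<Sum>w\<in>I. B x w * (\<Sum>n. f n w y))"
    by (simp add: mmult_def)
  also have "\<dots> = (\<Sum>w\<in>I. \<Sum>n. B x w * f n w y)"
    using assms by (intro sum.cong refl suminf_mult[symmetric]) auto
  also have "\<dots> = (\<Sum>n. \<Sum>w\<in>I. B x w * f n w y)"
    using assms by (intro suminf_sum[symmetric] summable_mult) auto
  finally show ?thesis by (simp add: mmult_def)
qed

lemma mexp_deriv_z:
  assumes "finite I"
  shows "((\<lambda>z. mexp I (\<lambda>a b. z * A a b) x y) has_field_derivative
           mmult I (mexp I (\<lambda>a b. z * A a b)) A x y) (at z)"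
proof -
  define c where "c = (\<lambda>n. mpow I A n x y / of_nat (fact n))"
  have fe: "(\<lambda>z. mexp I (\<lambda>a b. z * A a b) x y) = (\<lambda>z. \<Sum>n. c n * z ^ n)"
    by (simp add: mexp_scale c_def)
  have d: "((\<lambda>z. \<Sum>n. c n * z ^ n) has_field_derivative (\<Sum>n. diffs c n * z ^ n)) (at z)"
    by (rule termdiffs_strong_converges_everywhere) (use mexp_coeff_summable[OF assms] in \<open>simp add: c_def\<close>)
  have "mmult I (mexp I (\<lambda>a b. z * A a b)) A x y
      = mmult I (\<lambda>a b. \<Sum>n. mpow I A n a b / of_nat (fact n) * z ^ n) A x y"
  proof -
    have "mexp I (\<lambda>a b. z * A a b) = (\<lambda>a b. \<Sum>n. mpow I A n a b / of_nat (fact n) * z ^ n)"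
      by (intro ext, rule mexp_scale)
    then show ?thesis by (simp only:)
  qed
  also have "\<dots> = (\<Sum>n. mmult I (\<lambda>a b. mpow I A n a b / of_nat (fact n) * z ^ n) A x y)"
    by (rule mmult_suminf_right[OF assms]) (rule mexp_coeff_summable[OF assms])
  also have "\<dots> = (\<Sum>n. diffs c n * z ^ n)"
  proof (rule suminf_cong)
    fix n
    have "mmult I (\<lambda>a b. mpow I A n a b / of_nat (fact n) * z ^ n) A x y
        = mpow I A (Suc n) x y / of_nat (fact n) * z ^ n"
      by (simp add: mmult_def sum_distrib_left sum_distrib_right sum_divide_distrib mult_ac)
    also have "\<dots> = diffs c n * z ^ n"
      by (simp add: diffs_def c_def field_simps del: of_nat_Suc)
    finally show "mmult I (\<lambda>a b. mpow I A n a b / of_nat (fact n) * z ^ n) A x y = diffs c n * z ^ n" .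
  qed
  finally show ?thesis using d fe by simp
qed

lemma mexp_deriv:
  assumes "finite I"
  shows "((\<lambda>t. mexp I (\<lambda>a b. c * of_real t * M a b) x y) has_vector_derivative
           c * mmult I (mexp I (\<lambda>a b. c * of_real t * M a b)) M x y) (at t)"
proof -
  have g: "((\<lambda>t. c * of_real t) has_vector_derivative c) (at t)"
    by (auto intro!: derivative_eq_intros ext simp: has_vector_derivative_def scaleR_conv_of_real)
  have "((\<lambda>z. mexp I (\<lambda>a b. z * M a b) x y) \<circ> (\<lambda>t. c * of_real t) has_vector_derivative
           c * mmult I (mexp I (\<lambda>a b. (c * of_real t) * M a b)) M x y) (at t)"
    by (rule field_vector_diff_chain_at[OF g mexp_deriv_z[OF assms]])
  then show ?thesis by (simp add: o_def)
qed



lemma mmult_cong_r: "(\<And>w. w \<in> I \<Longrightarrow> B w y = B' w y) \<Longrightarrow> mmult I A B x y = mmult I A B' x y"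
  by (simp add: mmult_def)
lemma mmult_cong_l: "(\<And>w. w \<in> I \<Longrightarrow> A x w = A' x w) \<Longrightarrow> mmult I A B x y = mmult I A' B x y"
  by (simp add: mmult_def)

lemma mpow_comm:
  assumes "finite I" "x \<in> I" "y \<in> I"
  shows "mmult I A (mpow I A n) x y = mmult I (mpow I A n) A x y"
  using assms(2,3)
proof (induction n arbitrary: x y)
  case 0
  then show ?case using assms(1) by (simp add: mmult_mone_left mmult_mone_right)
next
  case (Suc n)
  have "mmult I A (mpow I A (Suc n)) x y = mmult I (mmult I A (mpow I A n)) A x y"
    using assms(1) by (simp add: mmult_assoc)
  also have "\<dots> = mmult I (mmult I (mpow I A n) A) A x y"
    using Suc by (intro mmult_cong_l) auto
  finally show ?case by simp
qed

lemma mexp_scale2: "mexp I (\<lambda>a b. z * M a b) = (\<lambda>a b. \<Sum>n. mpow I M n a b * (z ^ n / of_nat (fact n)))"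
  by (intro ext) (simp add: mexp_scale mult_ac)

lemma mexp_coeff_summable2:
  "finite I \<Longrightarrow> summable (\<lambda>n. mpow I M n a b * (z ^ n / of_nat (fact n)))"
  using mexp_coeff_summable[of I M a b z] by (simp add: mult_ac)

lemma mmult_scal_r: "mmult I A (\<lambda>a b. B a b * k) x y = mmult I A B x y * k"
  unfolding mmult_def by (subst sum_distrib_right) (simp add: mult_ac)
lemma mmult_scal_l: "mmult I (\<lambda>a b. B a b * k) A x y = mmult I B A x y * k"
  unfolding mmult_def by (subst sum_distrib_right) (simp add: mult_ac)

lemma mexp_comm:
  assumes "finite I" "x \<in> I" "y \<in> I"
  shows "mmult I M (mexp I (\<lambda>a b. z * M a b)) x y = mmult I (mexp I (\<lambda>a b. z * M a b)) M x y"
proof -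
  have "mmult I M (mexp I (\<lambda>a b. z * M a b)) x y
       = (\<Sum>n. mmult I M (\<lambda>a b. mpow I M n a b * (z ^ n / of_nat (fact n))) x y)"
    unfolding mexp_scale2 by (rule mmult_suminf_left[OF assms(1)]) (rule mexp_coeff_summable2[OF assms(1)])
  also have "\<dots> = (\<Sum>n. mmult I (\<lambda>a b. mpow I M n a b * (z ^ n / of_nat (fact n))) M x y)"
    unfolding mmult_scal_r mmult_scal_l using mpow_comm[OF assms] by simp
  also have "\<dots> = mmult I (mexp I (\<lambda>a b. z * M a b)) M x y"
    unfolding mexp_scale2 by (rule mmult_suminf_right[OF assms(1), symmetric]) (rule mexp_coeff_summable2[OF assms(1)])
  finally show ?thesis .
qed

lemma mexp_zero: "mexp I (\<lambda>a b. 0) x y = mone x y"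
  using mexp_zero_scale[of I "\<lambda>a b. 0" x y] by simp

lemma mexp_prod_const:
  assumes fin: "finite I"
    and dY: "\<And>t x y. x \<in> I \<Longrightarrow> y \<in> I \<Longrightarrow> ((\<lambda>s. Y s x y) has_vector_derivative c * mmult I (Y t) M x y) (at t)"
    and Y0: "\<And>x y. x \<in> I \<Longrightarrow> y \<in> I \<Longrightarrow> Y 0 x y = mone x y"
    and x: "x \<in> I" and y: "y \<in> I"
  shows "mmult I (Y t) (mexp I (\<lambda>a b. (- c) * of_real t * M a b)) x y = mone x y"
proof -
  define E where "E = (\<lambda>s. mexp I (\<lambda>a b. (- c) * of_real s * M a b))"
  define Z where "Z = (\<lambda>s. \<Sum>w\<in>I. Y s x w * E s w y)"
  have dE: "((\<lambda>s. E s w y) has_vector_derivative (- c) * mmult I (E s) M w y) (at s)" for s w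
    unfolding E_def by (rule mexp_deriv[OF fin])
  have dZ: "(Z has_vector_derivative 0) (at s within UNIV)" for s
  proof -
    have "(Z has_vector_derivative (\<Sum>w\<in>I. Y s x w * ((- c) * mmult I (E s) M w y) + c * mmult I (Y s) M x w * E s w y)) (at s)"
      unfolding Z_def
      by (intro has_vector_derivative_sum has_vector_derivative_mult dE dY x) auto
    moreover have "(\<Sum>w\<in>I. Y s x w * ((- c) * mmult I (E s) M w y) + c * mmult I (Y s) M x w * E s w y) = 0"
    proof -
      have "(\<Sum>w\<in>I. c * mmult I (Y s) M x w * E s w y) = c * mmult I (mmult I (Y s) M) (E s) x y"
        by (simp add: mmult_def sum_distrib_left mult_ac)
      also have "\<dots> = c * mmult I (Y s) (mmult I M (E s)) x y"
        using fin by (simp add: mmult_assoc)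
      also have "\<dots> = c * mmult I (Y s) (mmult I (E s) M) x y"
        unfolding E_def using fin y by (intro arg_cong[where f="\<lambda>u. c * u"] mmult_cong_r mexp_comm) auto
      also have "\<dots> = (\<Sum>w\<in>I. c * (Y s x w * mmult I (E s) M w y))"
        by (simp add: mmult_def sum_distrib_left)
      finally have 1: "(\<Sum>w\<in>I. c * mmult I (Y s) M x w * E s w y) = (\<Sum>w\<in>I. c * (Y s x w * mmult I (E s) M w y))" .
      have "(\<Sum>w\<in>I. Y s x w * ((- c) * mmult I (E s) M w y) + c * mmult I (Y s) M x w * E s w y)
         = (\<Sum>w\<in>I. c * mmult I (Y s) M x w * E s w y - c * (Y s x w * mmult I (E s) M w y))"
        by (intro sum.cong refl) (simp add: algebra_simps)
      also have "\<dots> = 0" by (simp only: sum_subtractf 1) simp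
      finally show ?thesis .
    qed
    ultimately show ?thesis by simp
  qed
  obtain k where k: "\<And>s. s \<in> UNIV \<Longrightarrow> Z s = k"
    using has_vector_derivative_zero_constant[OF convex_UNIV dZ] by blast
  have "Z t = Z 0" using k by simp
  also have "Z 0 = (\<Sum>w\<in>I. mone x w * mone w y)"
    unfolding Z_def E_def using Y0 x by (intro sum.cong refl) (simp add: mexp_zero)
  also have "\<dots> = mone x y"
    using mmult_mone_left[OF x fin, of mone y] by (simp add: mmult_def)
  finally show ?thesis unfolding Z_def E_def by (simp add: mmult_def)
qed

lemma mexp_inv:
  assumes fin: "finite I" and x: "x \<in> I" and y: "y \<in> I"
  shows "mmult I (mexp I (\<lambda>a b. c * of_real t * M a b)) (mexp I (\<lambda>a b. (- c) * of_real t * M a b)) x y = mone x y"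
  by (rule mexp_prod_const[OF fin _ _ x y]) (auto intro: mexp_deriv[OF fin] simp: mexp_zero)

lemma mexp_unique:
  assumes fin: "finite I"
    and dY: "\<And>t x y. x \<in> I \<Longrightarrow> y \<in> I \<Longrightarrow> ((\<lambda>s. Y s x y) has_vector_derivative c * mmult I (Y t) M x y) (at t)"
    and Y0: "\<And>x y. x \<in> I \<Longrightarrow> y \<in> I \<Longrightarrow> Y 0 x y = mone x y"
    and x: "x \<in> I" and y: "y \<in> I"
  shows "Y t x y = mexp I (\<lambda>a b. c * of_real t * M a b) x y"
proof -
  define E where "E = mexp I (\<lambda>a b. c * of_real t * M a b)"
  define E' where "E' = mexp I (\<lambda>a b. (- c) * of_real t * M a b)"
  have inv: "mmult I E' E w y = mone w y" if "w \<in> I" for w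
    using mexp_inv[OF fin that y, of "- c" t M] unfolding E_def E'_def by simp
  have "Y t x y = mmult I (Y t) mone x y" using fin y by (simp add: mmult_mone_right)
  also have "\<dots> = mmult I (Y t) (mmult I E' E) x y"
    using inv by (intro mmult_cong_r) auto
  also have "\<dots> = mmult I (mmult I (Y t) E') E x y" using fin by (simp add: mmult_assoc)
  also have "\<dots> = mmult I mone E x y"
    using mexp_prod_const[OF fin dY Y0 x] unfolding E'_def by (intro mmult_cong_l) auto
  also have "\<dots> = E x y" using fin x by (simp add: mmult_mone_left)
  finally show ?thesis unfolding E_def .
qed

lemma mpow_adj:
  assumes fin: "finite I" and "x \<in> I" "y \<in> I"
  shows "cnj (mpow I A n y x) = mpow I (adj A) n x y"
  using assms(2,3)
proof (induction n arbitrary: x y)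
  case 0
  then show ?case by (auto simp: mone_def)
next
  case (Suc n)
  have "cnj (mpow I A (Suc n) y x) = (\<Sum>w\<in>I. adj A x w * cnj (mpow I A n y w))"
    by (simp add: mmult_def adj_def mult.commute)
  also have "\<dots> = mmult I (adj A) (mpow I (adj A) n) x y"
    unfolding mmult_def using Suc by (intro sum.cong refl) auto
  also have "\<dots> = mpow I (adj A) (Suc n) x y"
    using mpow_comm[OF fin Suc.prems] by simp
  finally show ?case .
qed

lemma mexp_adj:
  assumes fin: "finite I" and x: "x \<in> I" and y: "y \<in> I"
  shows "cnj (mexp I A y x) = mexp I (adj A) x y"
proof -
  have "(\<lambda>n. cnj (mpow I A n y x / of_nat (fact n))) sums cnj (mexp I A y x)"
    unfolding mexp_def sums_cnj by (rule summable_sums) (rule mexp_summable[OF fin])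
  moreover have "(\<lambda>n. cnj (mpow I A n y x / of_nat (fact n))) = (\<lambda>n. mpow I (adj A) n x y / of_nat (fact n))"
    using mpow_adj[OF fin x y] by (auto intro!: ext)
  ultimately show ?thesis unfolding mexp_def by (metis sums_unique)
qed

lemma mexp_unitary:
  assumes fin: "finite I" and herm: "\<And>a b. M a b = cnj (M b a)" and cc: "cnj c = - c"
    and x: "x \<in> I" and y: "y \<in> I"
  shows "mmult I (adj (mexp I (\<lambda>a b. c * of_real t * M a b))) (mexp I (\<lambda>a b. c * of_real t * M a b)) x y = mone x y"
proof -
  have adjA: "adj (\<lambda>a b. c * of_real t * M a b) = (\<lambda>a b. (- c) * of_real t * M a b)"
    unfolding adj_def by (intro ext) (simp add: cc flip: herm)
  have "mmult I (adj (mexp I (\<lambda>a b. c * of_real t * M a b))) (mexp I (\<lambda>a b. c * of_real t * M a b)) x y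
      = mmult I (mexp I (\<lambda>a b. (- c) * of_real t * M a b)) (mexp I (\<lambda>a b. c * of_real t * M a b)) x y"
  proof (intro mmult_cong_l)
    fix w assume w: "w \<in> I"
    show "adj (mexp I (\<lambda>a b. c * of_real t * M a b)) x w = mexp I (\<lambda>a b. (- c) * of_real t * M a b) x w"
      by (simp only: adj_def[of "mexp I (\<lambda>a b. c * of_real t * M a b)"] mexp_adj[OF fin x w] adjA)
  qed
  also have "\<dots> = mone x y"
    using mexp_inv[OF fin x y, of "- c" t M] by simp
  finally show ?thesis .
qed



lemma finite_lists_n: "finite {ms :: ('m::finite) list. length ms = n}"
  using finite_lists_length_eq[of "UNIV :: 'm set" n] by simp

lemma finite_carrierT: "finite (carrierT T :: ('d::finite \<times> 'd \<times> ('m::finite) list) set)"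
  unfolding carrierT_def by (intro finite_cartesian_product finite_lists_n) auto

lemma sum_lists_Suc:
  "(\<Sum>ys\<in>{ys :: ('m::finite) list. length ys = Suc n}. f ys) = (\<Sum>y\<in>UNIV. \<Sum>ys\<in>{ys. length ys = n}. f (y # ys))"
proof -
  have e: "{ys :: 'm list. length ys = Suc n} = (\<lambda>(y, ys). y # ys) ` (UNIV \<times> {ys. length ys = n})"
    by (auto simp: length_Suc_conv image_iff)
  have i: "inj_on (\<lambda>(y, ys). y # ys) (UNIV \<times> {ys :: 'm list. length ys = n})"
    by (auto simp: inj_on_def)
  show ?thesis
    unfolding e by (subst sum.reindex[OF i]) (auto simp: sum.cartesian_product intro!: sum.cong)
qed

lemma sum_carrierT:
  "(\<Sum>y\<in>carrierT T. f y) = (\<Sum>a\<in>(UNIV::'d::finite set). \<Sum>s\<in>(UNIV::'d set). \<Sum>ys\<in>{ys :: ('m::finite) list. length ys = T}. f (a, s, ys))"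
  unfolding carrierT_def by (simp add: sum.cartesian_product)

definition lp :: "('m \<Rightarrow> 'm \<Rightarrow> complex) \<Rightarrow> 'm list \<Rightarrow> 'm list \<Rightarrow> complex" where
  "lp F xs ys = (\<Prod>k<length xs. F (xs ! k) (ys ! k))"

definition Ut :: "('m \<Rightarrow> 'm \<Rightarrow> complex) \<Rightarrow> ('d \<times> 'd \<times> 'm list) \<Rightarrow> ('d \<times> 'd \<times> 'm list) \<Rightarrow> complex" where
  "Ut F = (\<lambda>(a, s, xs) (a', s', ys). if a = a' \<and> s = s' \<and> length xs = length ys then lp F xs ys else 0)"

lemma has_vector_derivative_prod:
  fixes f :: "'i \<Rightarrow> real \<Rightarrow> complex"
  assumes "\<And>i. i \<in> S \<Longrightarrow> ((\<lambda>t. f i t) has_vector_derivative f' i) (at t)"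
  shows "((\<lambda>t. \<Prod>i\<in>S. f i t) has_vector_derivative (\<Sum>i\<in>S. f' i * (\<Prod>j\<in>S - {i}. f j t))) (at t)"
proof -
  have "((\<lambda>t. \<Prod>i\<in>S. f i t) has_derivative (\<lambda>y. \<Sum>i\<in>S. (y *\<^sub>R f' i) * (\<Prod>j\<in>S - {i}. f j t))) (at t)"
    using assms by (intro has_derivative_prod) (auto simp: has_vector_derivative_def)
  then show ?thesis unfolding has_vector_derivative_def
    by (rule has_derivative_eq_rhs) (auto intro!: ext simp: scaleR_sum_right)
qed

lemma site_sum:
  fixes F h :: "'m::finite \<Rightarrow> 'm \<Rightarrow> complex"
  assumes tau: "tau < T"
    and x: "(a, s, xs) \<in> carrierT T" and y: "(a', s', ys) \<in> (carrierT T :: ('d::finite \<times> 'd \<times> 'm list) set)"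
  shows "(\<Sum>z\<in>carrierT T. Ut F (a, s, xs) z * hsite h tau z (a', s', ys))
       = (if a = a' \<and> s = s' then mmult UNIV F h (xs ! tau) (ys ! tau) * (\<Prod>k\<in>{..<T} - {tau}. F (xs ! k) (ys ! k)) else 0)"
proof -
  have lx: "length xs = T" and ly: "length ys = T" using x y by (auto simp: carrierT_def)
  define g where "g = (\<lambda>m. (a', s', ys[tau := m]))"
  have gC: "g ` UNIV \<subseteq> carrierT T" using ly by (auto simp: g_def carrierT_def)
  have ginj: "inj g" using tau ly by (auto simp: g_def inj_def dest: arg_cong[where f="\<lambda>l. l ! tau"])
  have zero: "Ut F (a, s, xs) z * hsite h tau z (a', s', ys) = 0" if "z \<in> carrierT T - g ` UNIV" for z
  proof (rule ccontr)
    obtain a'' s'' zs where z: "z = (a'', s'', zs)" by (cases z) auto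
    assume "Ut F (a, s, xs) z * hsite h tau z (a', s', ys) \<noteq> 0"
    then have c: "a'' = a'" "s'' = s'" "length zs = length ys" "tau < length zs"
        "\<forall>k<length zs. k \<noteq> tau \<longrightarrow> zs ! k = ys ! k"
      unfolding z hsite_def by (auto split: if_splits)
    then have "zs = ys[tau := zs ! tau]"
      by (intro nth_equalityI) (auto simp: nth_list_update)
    then have "z \<in> g ` UNIV" unfolding z g_def using c by auto
    then show False using that by auto
  qed
  have "(\<Sum>z\<in>carrierT T. Ut F (a, s, xs) z * hsite h tau z (a', s', ys))
      = (\<Sum>z\<in>g ` UNIV. Ut F (a, s, xs) z * hsite h tau z (a', s', ys))"
    by (rule sum.mono_neutral_right[OF finite_carrierT gC]) (use zero in blast)
  also have "\<dots> = (\<Sum>m\<in>UNIV. Ut F (a, s, xs) (g m) * hsite h tau (g m) (a', s', ys))"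
    by (subst sum.reindex[OF ginj]) simp
  also have "\<dots> = (\<Sum>m\<in>UNIV. (if a = a' \<and> s = s' then F (xs ! tau) m * (\<Prod>k\<in>{..<T} - {tau}. F (xs ! k) (ys ! k)) else 0) * h m (ys ! tau))"
  proof (rule sum.cong[OF refl])
    fix m
    have lp: "lp F xs (ys[tau := m]) = F (xs ! tau) m * (\<Prod>k\<in>{..<T} - {tau}. F (xs ! k) (ys ! k))"
    proof -
      have "lp F xs (ys[tau := m]) = F (xs ! tau) (ys[tau := m] ! tau) * (\<Prod>k\<in>{..<T} - {tau}. F (xs ! k) (ys[tau := m] ! k))"
        unfolding lp_def lx using tau by (subst prod.remove[of _ tau]) auto
      also have "\<dots> = F (xs ! tau) m * (\<Prod>k\<in>{..<T} - {tau}. F (xs ! k) (ys ! k))"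
        using tau ly by (auto intro!: prod.cong simp: nth_list_update)
      finally show ?thesis .
    qed
    have hs: "hsite h tau (g m) (a', s', ys) = h m (ys ! tau)"
      unfolding hsite_def g_def using tau ly by (auto simp: nth_list_update)
    show "Ut F (a, s, xs) (g m) * hsite h tau (g m) (a', s', ys) = (if a = a' \<and> s = s' then F (xs ! tau) m * (\<Prod>k\<in>{..<T} - {tau}. F (xs ! k) (ys ! k)) else 0) * h m (ys ! tau)"
      unfolding hs by (simp add: Ut_def g_def lx ly lp)
  qed
  also have "\<dots> = (if a = a' \<and> s = s' then mmult UNIV F h (xs ! tau) (ys ! tau) * (\<Prod>k\<in>{..<T} - {tau}. F (xs ! k) (ys ! k)) else 0)"
    by (auto simp: mmult_def sum_distrib_right mult_ac)
  finally show ?thesis .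
qed

lemma Ut_deriv:
  fixes h :: "'m::finite \<Rightarrow> 'm \<Rightarrow> complex"
  assumes x: "x \<in> carrierT T" and y: "y \<in> (carrierT T :: ('d::finite \<times> 'd \<times> 'm list) set)"
  shows "((\<lambda>t. Ut (mexp UNIV (\<lambda>a b. \<i> * of_real t * h a b)) x y) has_vector_derivative
           \<i> * mmult (carrierT T) (Ut (mexp UNIV (\<lambda>a b. \<i> * of_real t * h a b))) (Htot h T) x y) (at t)"
proof -
  obtain a s xs where xx: "x = (a, s, xs)" by (cases x) auto
  obtain a' s' ys where yy: "y = (a', s', ys)" by (cases y) auto
  have lx: "length xs = T" and ly: "length ys = T" using x y xx yy by (auto simp: carrierT_def)
  define F where "F = (\<lambda>t. mexp UNIV (\<lambda>a b. \<i> * of_real t * h a b))"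
  have rhs: "mmult (carrierT T) (Ut (F t)) (Htot h T) x y
     = (\<Sum>tau<T. if a = a' \<and> s = s' then mmult UNIV (F t) h (xs ! tau) (ys ! tau) * (\<Prod>k\<in>{..<T} - {tau}. F t (xs ! k) (ys ! k)) else 0)"
  proof -
    have "mmult (carrierT T) (Ut (F t)) (Htot h T) x y = (\<Sum>tau<T. \<Sum>z\<in>carrierT T. Ut (F t) x z * hsite h tau z y)"
      by (simp add: mmult_def Htot_def sum_distrib_left sum.swap[of _ "{..<T}"])
    also have "\<dots> = (\<Sum>tau<T. if a = a' \<and> s = s' then mmult UNIV (F t) h (xs ! tau) (ys ! tau) * (\<Prod>k\<in>{..<T} - {tau}. F t (xs ! k) (ys ! k)) else 0)"
      using x y unfolding xx yy by (intro sum.cong refl site_sum) auto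
    finally show ?thesis .
  qed
  have main: "((\<lambda>t. Ut (F t) x y) has_vector_derivative \<i> * mmult (carrierT T) (Ut (F t)) (Htot h T) x y) (at t)"
  proof (cases "a = a' \<and> s = s'")
    case True
    have "((\<lambda>t. \<Prod>k\<in>{..<T}. F t (xs ! k) (ys ! k)) has_vector_derivative
            (\<Sum>k\<in>{..<T}. (\<i> * mmult UNIV (F t) h (xs ! k) (ys ! k)) * (\<Prod>j\<in>{..<T} - {k}. F t (xs ! j) (ys ! j)))) (at t)"
      unfolding F_def by (intro has_vector_derivative_prod mexp_deriv) simp
    moreover have "(\<lambda>t. Ut (F t) x y) = (\<lambda>t. \<Prod>k\<in>{..<T}. F t (xs ! k) (ys ! k))"
      using True lx ly by (simp add: xx yy Ut_def lp_def)
    moreover have "\<i> * mmult (carrierT T) (Ut (F t)) (Htot h T) x y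
       = (\<Sum>k\<in>{..<T}. (\<i> * mmult UNIV (F t) h (xs ! k) (ys ! k)) * (\<Prod>j\<in>{..<T} - {k}. F t (xs ! j) (ys ! j)))"
      unfolding rhs using True by (simp add: sum_distrib_left mult.assoc)
    ultimately show ?thesis by simp
  next
    case False
    have "(\<lambda>t. Ut (F t) x y) = (\<lambda>t. 0)"
      using False by (auto simp: xx yy Ut_def intro!: ext)
    moreover have "(\<Sum>tau<T. if a = a' \<and> s = s' then mmult UNIV (F t) h (xs ! tau) (ys ! tau) * (\<Prod>k\<in>{..<T} - {tau}. F t (xs ! k) (ys ! k)) else 0) = 0"
      using False by (intro sum.neutral) auto
    ultimately show ?thesis unfolding rhs by simp
  qed
  then show ?thesis by (simp only: F_def)
qed

lemma Ut_zero:
  fixes h :: "'m::finite \<Rightarrow> 'm \<Rightarrow> complex"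
  assumes x: "x \<in> carrierT T" and y: "y \<in> (carrierT T :: ('d::finite \<times> 'd \<times> 'm list) set)"
  shows "Ut (mexp UNIV (\<lambda>a b. 0)) x y = mone x y"
proof -
  obtain a s xs where xx: "x = (a, s, xs)" by (cases x) auto
  obtain a' s' ys where yy: "y = (a', s', ys)" by (cases y) auto
  have lx: "length xs = T" and ly: "length ys = T" using x y xx yy by (auto simp: carrierT_def)
  have F0: "mexp UNIV (\<lambda>a b. 0) = (mone :: 'm \<Rightarrow> 'm \<Rightarrow> complex)"
    by (intro ext) (simp add: mexp_zero)
  have lpself: "lp mone zs zs = 1" for zs by (simp add: lp_def mone_def)
  have lp1: "lp mone xs ys = (if xs = ys then 1 else 0)"
  proof (cases "xs = ys")
    case True then show ?thesis by (simp add: lp_def mone_def)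
  next
    case False
    then obtain k where k: "k < T" "xs ! k \<noteq> ys ! k" using lx ly nth_equalityI by metis
    then show ?thesis using False lx by (auto simp: lp_def mone_def intro!: prod_zero)
  qed
  have "Ut mone x y = (if a = a' \<and> s = s' \<and> xs = ys then 1 else 0)"
    using lx ly lp1 by (cases "xs = ys") (auto simp: xx yy Ut_def lpself)
  also have "\<dots> = mone x y" by (simp add: mone_def xx yy)
  finally show ?thesis unfolding F0 .
qed

lemma Ut_mexp:
  fixes h :: "'m::finite \<Rightarrow> 'm \<Rightarrow> complex"
  assumes x: "x \<in> carrierT T" and y: "y \<in> (carrierT T :: ('d::finite \<times> 'd \<times> 'm list) set)"
  shows "Ut (mexp UNIV (\<lambda>a b. \<i> * of_real t * h a b)) x y = mexp (carrierT T) (\<lambda>x y. \<i> * of_real t * Htot h T x y) x y"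
  by (rule mexp_unique[OF finite_carrierT _ _ x y, where Y="\<lambda>t. Ut (mexp UNIV (\<lambda>a b. \<i> * of_real t * h a b))"])
     (auto intro: Ut_deriv Ut_zero)



lemma sum_swap3: "(\<Sum>a\<in>A. \<Sum>b\<in>B. \<Sum>c\<in>C. f a b c) = (\<Sum>c\<in>C. \<Sum>b\<in>B. \<Sum>a\<in>A. f a b c)"
proof -
  have "(\<Sum>a\<in>A. \<Sum>b\<in>B. \<Sum>c\<in>C. f a b c) = (\<Sum>a\<in>A. \<Sum>c\<in>C. \<Sum>b\<in>B. f a b c)"
    by (rule sum.cong[OF refl]) (rule sum.swap)
  also have "\<dots> = (\<Sum>c\<in>C. \<Sum>a\<in>A. \<Sum>b\<in>B. f a b c)" by (rule sum.swap)
  also have "\<dots> = (\<Sum>c\<in>C. \<Sum>b\<in>B. \<Sum>a\<in>A. f a b c)"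
    by (rule sum.cong[OF refl]) (rule sum.swap)
  finally show ?thesis .
qed

lemma sum_swap3b: "(\<Sum>a\<in>A. \<Sum>b\<in>B. \<Sum>c\<in>C. f a b c) = (\<Sum>c\<in>C. \<Sum>a\<in>A. \<Sum>b\<in>B. f a b c)"
proof -
  have "(\<Sum>a\<in>A. \<Sum>b\<in>B. \<Sum>c\<in>C. f a b c) = (\<Sum>a\<in>A. \<Sum>c\<in>C. \<Sum>b\<in>B. f a b c)"
    by (rule sum.cong[OF refl]) (rule sum.swap)
  also have "\<dots> = (\<Sum>c\<in>C. \<Sum>a\<in>A. \<Sum>b\<in>B. f a b c)" by (rule sum.swap)
  finally show ?thesis .
qed

lemma delta2: "(\<Sum>a'\<in>(UNIV::'a::finite set). \<Sum>s'\<in>(UNIV::'b::finite set). if a' = a \<and> s' = s then S else 0) = S"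
proof -
  have "(\<Sum>s'\<in>(UNIV::'b set). if a' = a \<and> s' = s then S else 0) = (if a' = a then S else 0)" for a'
    by (cases "a' = a") simp_all
  then show ?thesis by simp
qed

lemma lp_Cons: "lp F (x # xs) (y # ys) = F x y * lp F xs ys"
  unfolding lp_def by (simp only: length_Cons prod.lessThan_Suc_shift) simp

lemma lp_wprod:
  fixes F :: "'m::finite \<Rightarrow> 'm \<Rightarrow> complex" and W :: "'m \<Rightarrow> 'd::finite \<Rightarrow> 'd \<Rightarrow> complex"
  shows "length xs = n \<Longrightarrow> (\<Sum>ys\<in>{ys. length ys = n}. lp F xs ys * wprod W ys s s2)
          = wprod (\<lambda>m i j. \<Sum>m'\<in>UNIV. F m m' * W m' i j) xs s s2"
proof (induction n arbitrary: xs s2)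
  case 0
  then show ?case by (simp add: lp_def)
next
  case (Suc n)
  then obtain x xs' where xs: "xs = x # xs'" and l: "length xs' = n" by (auto simp: length_Suc_conv)
  define Kt where "Kt = (\<lambda>m i j. \<Sum>m'\<in>UNIV. F m m' * W m' i j)"
  have "(\<Sum>ys\<in>{ys. length ys = Suc n}. lp F xs ys * wprod W ys s s2)
      = (\<Sum>y\<in>UNIV. \<Sum>ys\<in>{ys. length ys = n}. \<Sum>z\<in>UNIV. lp F xs' ys * wprod W ys s z * (F x y * W y z s2))"
    unfolding sum_lists_Suc xs
    by (simp add: lp_Cons mmult_def sum_distrib_left mult_ac)
  also have "\<dots> = (\<Sum>z\<in>UNIV. \<Sum>y\<in>UNIV. \<Sum>ys\<in>{ys. length ys = n}. lp F xs' ys * wprod W ys s z * (F x y * W y z s2))"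
    by (rule sum_swap3b)
  also have "\<dots> = (\<Sum>z\<in>UNIV. (\<Sum>ys\<in>{ys. length ys = n}. lp F xs' ys * wprod W ys s z) * Kt x z s2)"
    by (simp add: Kt_def sum_distrib_left sum_distrib_right)
  also have "\<dots> = (\<Sum>z\<in>UNIV. wprod Kt xs' s z * Kt x z s2)"
    using Suc.IH[OF l] unfolding Kt_def by simp
  also have "\<dots> = wprod Kt xs s s2" by (simp add: xs mmult_def)
  finally show ?case unfolding Kt_def .
qed

lemma Kt_eq_K:
  fixes K :: "real \<Rightarrow> 'm::finite \<Rightarrow> 'd \<Rightarrow> 'd \<Rightarrow> complex"
  shows "(\<lambda>m i j. \<Sum>m'\<in>UNIV. mexp UNIV (\<lambda>a b. \<i> * of_real t * h a b) m m' * Wop K h t m' i j) = K t"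
proof (intro ext)
  fix m i j
  have "(\<Sum>m'\<in>UNIV. mexp UNIV (\<lambda>a b. \<i> * of_real t * h a b) m m' * Wop K h t m' i j)
      = (\<Sum>m''\<in>UNIV. mmult UNIV (mexp UNIV (\<lambda>a b. \<i> * of_real t * h a b)) (mexp UNIV (\<lambda>a b. (- \<i>) * of_real t * h a b)) m m'' * K t m'' i j)"
    unfolding Wop_def mmult_def sum_distrib_left sum_distrib_right by (subst sum.swap) (simp add: mult.assoc)
  also have "\<dots> = (\<Sum>m''\<in>UNIV. mone m m'' * K t m'' i j)"
    using mexp_inv[of "UNIV :: 'm set" m _ \<i> t h] by simp
  also have "\<dots> = K t m i j" unfolding mone_def by (simp add: sum_delta_mult1)
  finally show "(\<Sum>m'\<in>UNIV. mexp UNIV (\<lambda>a b. \<i> * of_real t * h a b) m m' * Wop K h t m' i j) = K t m i j" .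
qed

lemma first_conj:
  fixes K :: "real \<Rightarrow> 'm::finite \<Rightarrow> 'd::finite \<Rightarrow> 'd \<Rightarrow> complex"
    and xi :: "'d \<times> 'd \<Rightarrow> complex"
  assumes x: "x \<in> carrierT T"
  shows "PhiT K xi T th x
       = mvec (carrierT T) (mexp (carrierT T) (\<lambda>x y. \<i> * of_real th * Htot h T x y)) (PhiT (Wop K h) xi T th) x"
proof -
  obtain a s xs where xx: "x = (a, s, xs)" by (cases x) auto
  have lx: "length xs = T" using x xx by (auto simp: carrierT_def)
  define F where "F = mexp UNIV (\<lambda>a b. \<i> * of_real th * h a b)"
  define L where "L = {ys :: 'm list. length ys = T}"
  have "mvec (carrierT T) (mexp (carrierT T) (\<lambda>x y. \<i> * of_real th * Htot h T x y)) (PhiT (Wop K h) xi T th) x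
      = (\<Sum>y\<in>carrierT T. Ut F x y * PhiT (Wop K h) xi T th y)"
    unfolding mvec_def F_def using x by (intro sum.cong refl) (simp add: Ut_mexp)
  also have "\<dots> = (\<Sum>a'\<in>UNIV. \<Sum>s'\<in>UNIV. \<Sum>ys\<in>L. Ut F x (a', s', ys) * PhiT (Wop K h) xi T th (a', s', ys))"
    unfolding L_def by (rule sum_carrierT)
  also have "\<dots> = (\<Sum>a'\<in>UNIV. \<Sum>s'\<in>UNIV. if a' = a \<and> s' = s then (\<Sum>ys\<in>L. lp F xs ys * PhiT (Wop K h) xi T th (a, s, ys)) else 0)"
  proof -
    have inner: "(\<Sum>ys\<in>L. Ut F x (a', s', ys) * PhiT (Wop K h) xi T th (a', s', ys))
       = (if a' = a \<and> s' = s then (\<Sum>ys\<in>L. lp F xs ys * PhiT (Wop K h) xi T th (a, s, ys)) else 0)" for a' s'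
      unfolding xx L_def by (auto simp: Ut_def lx intro!: sum.cong)
    show ?thesis by (simp only: inner)
  qed
  also have "\<dots> = (\<Sum>ys\<in>L. lp F xs ys * PhiT (Wop K h) xi T th (a, s, ys))"
    by (rule delta2)
  also have "\<dots> = (\<Sum>ys\<in>L. \<Sum>s2\<in>UNIV. lp F xs ys * wprod (Wop K h th) ys s s2 * xi (a, s2))"
    unfolding L_def PhiT_def by (intro sum.cong refl) (simp add: sum_distrib_left mult_ac)
  also have "\<dots> = (\<Sum>s2\<in>UNIV. (\<Sum>ys\<in>L. lp F xs ys * wprod (Wop K h th) ys s s2) * xi (a, s2))"
    by (subst sum.swap) (simp add: sum_distrib_right)
  also have "\<dots> = (\<Sum>s2\<in>UNIV. wprod (K th) xs s s2 * xi (a, s2))"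
    unfolding L_def lp_wprod[OF lx] F_def Kt_eq_K ..
  also have "\<dots> = PhiT K xi T th x"
    by (simp add: PhiT_def xx lx)
  finally show ?thesis ..
qed



abbreviation mm :: "('d::finite \<Rightarrow> 'd \<Rightarrow> complex) \<Rightarrow> ('d \<Rightarrow> 'd \<Rightarrow> complex) \<Rightarrow> 'd \<Rightarrow> 'd \<Rightarrow> complex" where
  "mm \<equiv> mmult UNIV"

lemma mm_assoc: "mm (mm A B) C = mm A (mm B C)"
  by (simp add: mmult_assoc)

lemma mtrace_cyc: "mtrace (mm A B) = mtrace (mm B A)"
  unfolding mtrace_def mmult_def by (subst sum.swap) (simp add: mult.commute)

lemma mtrace_cyc3: "mtrace (mm (mm (mm A C) B) R) = mtrace (mm C (mm (mm B R) A))"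
proof -
  have "mtrace (mm (mm (mm A C) B) R) = mtrace (mm A (mm C (mm B R)))" by (simp add: mm_assoc)
  also have "\<dots> = mtrace (mm (mm C (mm B R)) A)" by (rule mtrace_cyc)
  also have "\<dots> = mtrace (mm C (mm (mm B R) A))" by (simp add: mm_assoc)
  finally show ?thesis .
qed

lemma mtrace_madd: "mtrace (mm (madd A B) R) = mtrace (mm A R) + mtrace (mm B R)"
  unfolding mmult_madd_left by (simp add: madd_def mtrace_def sum.distrib)

lemma mtrace_msum: "finite S \<Longrightarrow> mtrace (mm (msum S f) R) = (\<Sum>k\<in>S. mtrace (mm (f k) R))"
  unfolding mmult_msum_left by (unfold mtrace_def msum_def) (rule sum.swap)

lemma mtrace_msum_r: "finite S \<Longrightarrow> mtrace (mm C (msum S f)) = (\<Sum>k\<in>S. mtrace (mm C (f k)))"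
  unfolding mmult_msum_right by (unfold mtrace_def msum_def) (rule sum.swap)

lemma msum_sandwich: "finite S \<Longrightarrow> msum S (\<lambda>k. mmult I (mmult I A (f k)) B) = mmult I (mmult I A (msum S f)) B"
  by (simp add: mmult_msum_left mmult_msum_right)

lemma msum_madd: "msum S (\<lambda>k. madd (f k) (g k)) = madd (msum S f) (msum S g)"
  by (auto simp: msum_def madd_def sum.distrib intro!: ext)

lemma madd_zero_l[simp]: "madd (\<lambda>i j. 0) A = A" and madd_zero_r[simp]: "madd A (\<lambda>i j. 0) = A"
  by (auto simp: madd_def)

lemma msum_lists_Suc: "msum {ys :: ('m::finite) list. length ys = Suc n} f = msum UNIV (\<lambda>y. msum {ys. length ys = n} (\<lambda>ys. f (y # ys)))"
  by (auto simp: msum_def sum_lists_Suc intro!: ext)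

primrec wdprod :: "('m \<Rightarrow> 'd::finite \<Rightarrow> 'd \<Rightarrow> complex) \<Rightarrow> ('m \<Rightarrow> 'd \<Rightarrow> 'd \<Rightarrow> complex) \<Rightarrow> 'm list \<Rightarrow> 'd \<Rightarrow> 'd \<Rightarrow> complex" where
  "wdprod X D [] = (\<lambda>i j. 0)"
| "wdprod X D (m # ms) = madd (mmult UNIV (wdprod X D ms) (X m)) (mmult UNIV (wprod X ms) (D m))"

locale phys =
  fixes W D :: "'m::finite \<Rightarrow> 'd::finite \<Rightarrow> 'd \<Rightarrow> complex" and rho :: "'d \<Rightarrow> 'd \<Rightarrow> complex"
  assumes krausW: "msum UNIV (\<lambda>m. mm (adj (W m)) (W m)) = mone"
    and gauge: "msum UNIV (\<lambda>m. mm (adj (W m)) (D m)) = (\<lambda>i j. 0)"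
    and fixW: "msum UNIV (\<lambda>m. mm (mm (W m) rho) (adj (W m))) = rho"
begin

definition "An n = msum {ms. length ms = n} (\<lambda>ms. mm (adj (wprod W ms)) (wprod W ms))"
definition "Bn n = msum {ms. length ms = n} (\<lambda>ms. mm (adj (wprod W ms)) (wdprod W D ms))"
definition "Cn n = msum {ms. length ms = n} (\<lambda>ms. mm (adj (wdprod W D ms)) (wdprod W D ms))"

lemma An: "An n = mone"
proof (induction n)
  case 0
  then show ?case by (simp add: An_def msum_def)
next
  case (Suc n)
  have "An (Suc n) = msum UNIV (\<lambda>m. msum {ms. length ms = n} (\<lambda>ms. mm (mm (adj (W m)) (mm (adj (wprod W ms)) (wprod W ms))) (W m)))"
    unfolding An_def msum_lists_Suc by (simp add: adj_mmult mm_assoc)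
  also have "\<dots> = msum UNIV (\<lambda>m. mm (mm (adj (W m)) (An n)) (W m))"
    unfolding An_def by (subst msum_sandwich) (simp_all add: finite_lists_n)
  also have "\<dots> = mone" using Suc krausW by simp
  finally show ?case .
qed

lemma Bn: "Bn n = (\<lambda>i j. 0)"
proof (induction n)
  case 0
  then show ?case by (simp add: Bn_def msum_def)
next
  case (Suc n)
  have "Bn (Suc n) = msum UNIV (\<lambda>m. madd (msum {ms. length ms = n} (\<lambda>ms. mm (mm (adj (W m)) (mm (adj (wprod W ms)) (wdprod W D ms))) (W m)))
                                        (msum {ms. length ms = n} (\<lambda>ms. mm (mm (adj (W m)) (mm (adj (wprod W ms)) (wprod W ms))) (D m))))"
    unfolding Bn_def msum_lists_Suc
    by (simp add: adj_mmult mm_assoc mmult_madd_right msum_madd)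
  also have "\<dots> = msum UNIV (\<lambda>m. madd (mm (mm (adj (W m)) (Bn n)) (W m)) (mm (mm (adj (W m)) (An n)) (D m)))"
    unfolding An_def Bn_def by (subst msum_sandwich, simp add: finite_lists_n)+ (rule refl)
  also have "\<dots> = (\<lambda>i j. 0)" using Suc gauge by (simp add: An)
  finally show ?case .
qed

lemma Bn_adj: "msum {ms. length ms = n} (\<lambda>ms. mm (adj (wdprod W D ms)) (wprod W ms)) = (\<lambda>i j. 0)"
proof -
  have "msum {ms. length ms = n} (\<lambda>ms. mm (adj (wdprod W D ms)) (wprod W ms)) = adj (Bn n)"
    unfolding Bn_def adj_msum adj_mmult by simp
  then show ?thesis by (simp add: Bn)
qed

definition "alpha = (\<Sum>m\<in>UNIV. mtrace (mm (mm (D m) rho) (adj (D m))))"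

lemma Cn: "mtrace (mm (Cn n) rho) = of_nat n * alpha"
proof (induction n)
  case 0
  then show ?case by (simp add: Cn_def msum_def mtrace_def mmult_def)
next
  case (Suc n)
  let ?L = "{ms :: 'm list. length ms = n}"
  have "Cn (Suc n) = msum UNIV (\<lambda>m. madd (madd (msum ?L (\<lambda>ms. mm (mm (adj (W m)) (mm (adj (wdprod W D ms)) (wdprod W D ms))) (W m)))
                                                (msum ?L (\<lambda>ms. mm (mm (adj (D m)) (mm (adj (wprod W ms)) (wdprod W D ms))) (W m))))
                                          (madd (msum ?L (\<lambda>ms. mm (mm (adj (W m)) (mm (adj (wdprod W D ms)) (wprod W ms))) (D m)))
                                                (msum ?L (\<lambda>ms. mm (mm (adj (D m)) (mm (adj (wprod W ms)) (wprod W ms))) (D m)))))"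
    unfolding Cn_def msum_lists_Suc
    by (simp add: adj_mmult adj_madd mm_assoc mmult_madd_right mmult_madd_left msum_madd)
  also have "\<dots> = msum UNIV (\<lambda>m. madd (madd (mm (mm (adj (W m)) (Cn n)) (W m)) (mm (mm (adj (D m)) (Bn n)) (W m)))
                                          (madd (mm (mm (adj (W m)) (\<lambda>i j. 0)) (D m)) (mm (mm (adj (D m)) (An n)) (D m))))"
    unfolding An_def Bn_def Cn_def by (subst msum_sandwich, simp add: finite_lists_n)+ (simp only: Bn_adj)
  also have "\<dots> = madd (msum UNIV (\<lambda>m. mm (mm (adj (W m)) (Cn n)) (W m))) (msum UNIV (\<lambda>m. mm (adj (D m)) (D m)))"
    by (simp add: An Bn msum_madd)
  finally have C: "Cn (Suc n) = \<dots>" .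
  have 1: "mtrace (mm (msum UNIV (\<lambda>m. mm (mm (adj (W m)) (Cn n)) (W m))) rho) = mtrace (mm (Cn n) rho)"
  proof -
    have "mtrace (mm (msum UNIV (\<lambda>m. mm (mm (adj (W m)) (Cn n)) (W m))) rho)
        = (\<Sum>m\<in>UNIV. mtrace (mm (Cn n) (mm (mm (W m) rho) (adj (W m)))))"
      by (simp add: mtrace_msum mtrace_cyc3)
    also have "\<dots> = mtrace (mm (Cn n) rho)"
      by (simp add: mtrace_msum_r[symmetric] fixW)
    finally show ?thesis .
  qed
  have 2: "mtrace (mm (msum UNIV (\<lambda>m. mm (adj (D m)) (D m))) rho) = alpha"
  proof -
    have "mtrace (mm (msum UNIV (\<lambda>m. mm (adj (D m)) (D m))) rho) = (\<Sum>m\<in>UNIV. mtrace (mm (mm (adj (D m)) (D m)) rho))"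
      by (simp add: mtrace_msum)
    also have "\<dots> = alpha" unfolding alpha_def
      by (intro sum.cong refl) (metis mm_assoc mtrace_cyc)
    finally show ?thesis .
  qed
  show ?case unfolding C mtrace_madd 1 2 Suc by (simp add: algebra_simps)
qed

end



lemma Wop_deriv:
  fixes K :: "real \<Rightarrow> 'm::finite \<Rightarrow> 'd \<Rightarrow> 'd \<Rightarrow> complex"
  assumes diff: "\<And>t m i j. (\<lambda>s. K s m i j) differentiable (at t)"
  shows "((\<lambda>s. Wop K h s m i j) has_vector_derivative mderiv (\<lambda>t. Wop K h t m) t i j) (at t)"
proof -
  have "(\<lambda>s. Wop K h s m i j) differentiable (at t)"
    unfolding Wop_def
    by (intro differentiable_sum ballI differentiable_mult diff differentiableI_vector[OF mexp_deriv]) auto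
  then show ?thesis unfolding mderiv_def vector_derivative_works by simp
qed

lemma wprod_deriv:
  assumes "\<And>m i j. ((\<lambda>s. X s m i j) has_vector_derivative D m i j) (at t)"
  shows "((\<lambda>s. wprod (X s) ms i j) has_vector_derivative wdprod (X t) D ms i j) (at t)"
proof (induction ms arbitrary: i j)
  case Nil
  then show ?case by (simp add: has_vector_derivative_const)
next
  case (Cons m ms)
  have "((\<lambda>s. \<Sum>z\<in>UNIV. wprod (X s) ms i z * X s m z j) has_vector_derivative
          (\<Sum>z\<in>UNIV. wprod (X t) ms i z * D m z j + wdprod (X t) D ms i z * X t m z j)) (at t)"
    by (intro has_vector_derivative_sum has_vector_derivative_mult Cons assms)
  moreover have "(\<Sum>z\<in>UNIV. wprod (X t) ms i z * D m z j + wdprod (X t) D ms i z * X t m z j) = wdprod (X t) D (m # ms) i j"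
    by (simp add: madd_def mmult_def sum.distrib)
  ultimately show ?case by (simp add: mmult_def)
qed

lemma conn:
  fixes A B :: "('m::finite) list \<Rightarrow> 'd::finite \<Rightarrow> 'd \<Rightarrow> complex" and xi :: "'d \<times> 'd \<Rightarrow> complex"
  assumes purif: "\<And>s s'. rho s s' = (\<Sum>a\<in>UNIV. xi (a, s) * cnj (xi (a, s')))"
  shows "inner_c (carrierT T) (\<lambda>(a, s, ms). \<Sum>s'\<in>UNIV. A ms s s' * xi (a, s')) (\<lambda>(a, s, ms). \<Sum>s'\<in>UNIV. B ms s s' * xi (a, s'))
       = mtrace (mm (msum {ms. length ms = T} (\<lambda>ms. mm (adj (A ms)) (B ms))) rho)"
proof -
  define Xi where "Xi = (\<lambda>s' a. xi (a, s'))"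
  have rho: "rho = mm Xi (adj Xi)"
    by (auto intro!: ext simp: purif mmult_def Xi_def adj_def)
  have per: "(\<Sum>a\<in>UNIV. \<Sum>s\<in>UNIV. cnj (\<Sum>s'\<in>UNIV. A ms s s' * xi (a, s')) * (\<Sum>s'\<in>UNIV. B ms s s' * xi (a, s')))
       = mtrace (mm (mm (adj (A ms)) (B ms)) rho)" for ms
  proof -
    have "(\<Sum>a\<in>UNIV. \<Sum>s\<in>UNIV. cnj (\<Sum>s'\<in>UNIV. A ms s s' * xi (a, s')) * (\<Sum>s'\<in>UNIV. B ms s s' * xi (a, s')))
        = mtrace (mm (adj (mm (A ms) Xi)) (mm (B ms) Xi))"
      by (simp only: mtrace_def mmult_def adj_def Xi_def)
    also have "\<dots> = mtrace (mm (adj Xi) (mm (adj (A ms)) (mm (B ms) Xi)))"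
      by (simp add: adj_mmult mm_assoc)
    also have "\<dots> = mtrace (mm (mm (adj (A ms)) (mm (B ms) Xi)) (adj Xi))"
      by (rule mtrace_cyc)
    also have "\<dots> = mtrace (mm (mm (adj (A ms)) (B ms)) rho)"
      by (simp add: mm_assoc rho)
    finally show ?thesis .
  qed
  have "inner_c (carrierT T) (\<lambda>(a, s, ms). \<Sum>s'\<in>UNIV. A ms s s' * xi (a, s')) (\<lambda>(a, s, ms). \<Sum>s'\<in>UNIV. B ms s s' * xi (a, s'))
      = (\<Sum>a\<in>UNIV. \<Sum>s\<in>UNIV. \<Sum>ms\<in>{ms. length ms = T}. cnj (\<Sum>s'\<in>UNIV. A ms s s' * xi (a, s')) * (\<Sum>s'\<in>UNIV. B ms s s' * xi (a, s')))"
    unfolding inner_c_def by (subst sum_carrierT) simp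
  also have "\<dots> = (\<Sum>ms\<in>{ms. length ms = T}. \<Sum>a\<in>UNIV. \<Sum>s\<in>UNIV. cnj (\<Sum>s'\<in>UNIV. A ms s s' * xi (a, s')) * (\<Sum>s'\<in>UNIV. B ms s s' * xi (a, s')))"
    by (rule sum_swap3b)
  also have "\<dots> = (\<Sum>ms\<in>{ms. length ms = T}. mtrace (mm (mm (adj (A ms)) (B ms)) rho))"
    by (simp only: per)
  also have "\<dots> = mtrace (mm (msum {ms. length ms = T} (\<lambda>ms. mm (adj (A ms)) (B ms))) rho)"
    by (simp add: mtrace_msum finite_lists_n)
  finally show ?thesis .
qed

lemma Htot_herm:
  assumes herm: "\<And>a b. h a b = cnj (h b a)"
  shows "Htot h T x y = cnj (Htot h T y x)"
proof -
  have "hsite h tau x y = cnj (hsite h tau y x)" for tau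
  proof -
    obtain a s ms where x: "x = (a, s, ms)" by (cases x) auto
    obtain a' s' ms' where y: "y = (a', s', ms')" by (cases y) auto
    show ?thesis unfolding x y hsite_def by (auto simp: herm[of "ms ! tau" "ms' ! tau"])
  qed
  then show ?thesis by (simp add: Htot_def)
qed

lemma Wmix:
  fixes K :: "real \<Rightarrow> 'm::finite \<Rightarrow> 'd \<Rightarrow> 'd \<Rightarrow> complex"
  assumes herm: "\<And>a b. h a b = cnj (h b a)"
  shows "(\<Sum>m\<in>UNIV. cnj (Wop K h t m p q) * Wop K h t m r u) = (\<Sum>m\<in>UNIV. cnj (K t m p q) * K t m r u)"
proof -
  define E where "E = mexp UNIV (\<lambda>a b. (- \<i>) * of_real t * h a b)"
  have w: "(\<lambda>m. Wop K h t m p q) = mvec UNIV E (\<lambda>m. K t m p q)" for p q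
    by (auto simp: Wop_def mvec_def E_def)
  have "(\<Sum>m\<in>UNIV. cnj (Wop K h t m p q) * Wop K h t m r u) = inner_c UNIV (mvec UNIV E (\<lambda>m. K t m p q)) (mvec UNIV E (\<lambda>m. K t m r u))"
    unfolding inner_c_def w[symmetric] ..
  also have "\<dots> = inner_c UNIV (\<lambda>m. K t m p q) (\<lambda>m. K t m r u)"
  proof (rule unitary_inner)
    fix x y :: 'm
    show "mmult UNIV (adj E) E x y = mone x y"
      unfolding E_def by (rule mexp_unitary[OF finite_class.finite_UNIV herm]) auto
  qed simp
  finally show ?thesis by (simp add: inner_c_def)
qed



lemma inner_expand:
  "inner_c I (\<lambda>y. \<i> * p y + q y) (\<lambda>y. \<i> * p y + q y) = inner_c I p p + inner_c I q q + \<i> * inner_c I q p - \<i> * inner_c I p q"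
proof -
  have "inner_c I (\<lambda>y. \<i> * p y + q y) (\<lambda>y. \<i> * p y + q y)
      = (\<Sum>y\<in>I. cnj (p y) * p y + cnj (q y) * q y + \<i> * (cnj (q y) * p y) - \<i> * (cnj (p y) * q y))"
    unfolding inner_c_def by (intro sum.cong refl) (simp add: algebra_simps)
  also have "\<dots> = inner_c I p p + inner_c I q q + \<i> * inner_c I q p - \<i> * inner_c I p q"
    unfolding inner_c_def by (simp add: sum.distrib sum_subtractf sum_distrib_left)
  finally show ?thesis .
qed

lemma inner_expand2:
  "inner_c I (\<lambda>y. \<i> * p y + q y) r = - \<i> * inner_c I p r + inner_c I q r"
proof -
  have "inner_c I (\<lambda>y. \<i> * p y + q y) r = (\<Sum>y\<in>I. - \<i> * (cnj (p y) * r y) + cnj (q y) * r y)"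
    unfolding inner_c_def by (intro sum.cong refl) (simp add: algebra_simps)
  also have "\<dots> = - \<i> * inner_c I p r + inner_c I q r"
    unfolding inner_c_def sum.distrib by (simp add: sum_distrib_left)
  finally show ?thesis .
qed

lemma rearr:
  fixes F :: "'m::finite \<Rightarrow> 'd::finite \<Rightarrow> 'd \<Rightarrow> complex"
  shows "(\<Sum>m\<in>UNIV. \<Sum>l\<in>UNIV. (\<Sum>k\<in>UNIV. F m a k * rho k l) * cnj (F m b l))
       = (\<Sum>k\<in>UNIV. \<Sum>l\<in>UNIV. rho k l * (\<Sum>m\<in>UNIV. cnj (F m b l) * F m a k))"
proof -
  have "(\<Sum>m\<in>UNIV. \<Sum>l\<in>UNIV. (\<Sum>k\<in>UNIV. F m a k * rho k l) * cnj (F m b l))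
      = (\<Sum>m\<in>UNIV. \<Sum>l\<in>UNIV. \<Sum>k\<in>UNIV. rho k l * (cnj (F m b l) * F m a k))"
    by (simp add: sum_distrib_right sum_distrib_left mult_ac)
  also have "\<dots> = (\<Sum>k\<in>UNIV. \<Sum>l\<in>UNIV. \<Sum>m\<in>UNIV. rho k l * (cnj (F m b l) * F m a k))"
    by (rule sum_swap3)
  also have "\<dots> = (\<Sum>k\<in>UNIV. \<Sum>l\<in>UNIV. rho k l * (\<Sum>m\<in>UNIV. cnj (F m b l) * F m a k))"
    by (simp add: sum_distrib_left)
  finally show ?thesis .
qed

lemma krausW:
  fixes K :: "real \<Rightarrow> 'm::finite \<Rightarrow> 'd::finite \<Rightarrow> 'd \<Rightarrow> complex"
  assumes herm: "\<And>a b. h a b = cnj (h b a)"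
    and kraus: "(\<lambda>i j. \<Sum>m\<in>UNIV. mmult UNIV (adj (K t m)) (K t m) i j) = mone"
  shows "msum UNIV (\<lambda>m. mm (adj (Wop K h t m)) (Wop K h t m)) = mone"
proof (intro ext)
  fix i j
  have "msum UNIV (\<lambda>m. mm (adj (Wop K h t m)) (Wop K h t m)) i j = (\<Sum>k\<in>UNIV. \<Sum>m\<in>UNIV. cnj (Wop K h t m k i) * Wop K h t m k j)"
    unfolding msum_def mmult_def adj_def by (rule sum.swap)
  also have "\<dots> = (\<Sum>k\<in>UNIV. \<Sum>m\<in>UNIV. cnj (K t m k i) * K t m k j)"
    by (simp only: Wmix[OF herm])
  also have "\<dots> = (\<Sum>m\<in>UNIV. mmult UNIV (adj (K t m)) (K t m) i j)"
    unfolding mmult_def adj_def by (rule sum.swap)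
  also have "\<dots> = mone i j" using fun_cong[OF fun_cong[OF kraus, of i], of j] by simp
  finally show "msum UNIV (\<lambda>m. mm (adj (Wop K h t m)) (Wop K h t m)) i j = mone i j" .
qed

lemma fixW:
  fixes K :: "real \<Rightarrow> 'm::finite \<Rightarrow> 'd::finite \<Rightarrow> 'd \<Rightarrow> complex"
  assumes herm: "\<And>a b. h a b = cnj (h b a)"
    and fixed: "(\<lambda>a b. \<Sum>m\<in>UNIV. mmult UNIV (mmult UNIV (K t m) rho) (adj (K t m)) a b) = rho"
  shows "msum UNIV (\<lambda>m. mm (mm (Wop K h t m) rho) (adj (Wop K h t m))) = rho"
proof (intro ext)
  fix a b
  have "msum UNIV (\<lambda>m. mm (mm (Wop K h t m) rho) (adj (Wop K h t m))) a b
      = (\<Sum>k\<in>UNIV. \<Sum>l\<in>UNIV. rho k l * (\<Sum>m\<in>UNIV. cnj (Wop K h t m b l) * Wop K h t m a k))"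
    unfolding msum_def mmult_def adj_def by (rule rearr)
  also have "\<dots> = (\<Sum>k\<in>UNIV. \<Sum>l\<in>UNIV. rho k l * (\<Sum>m\<in>UNIV. cnj (K t m b l) * K t m a k))"
    by (simp only: Wmix[OF herm])
  also have "\<dots> = (\<Sum>m\<in>UNIV. mmult UNIV (mmult UNIV (K t m) rho) (adj (K t m)) a b)"
    unfolding mmult_def adj_def by (simp only: rearr[symmetric])
  also have "\<dots> = rho a b" using fun_cong[OF fun_cong[OF fixed, of a], of b] by simp
  finally show "msum UNIV (\<lambda>m. mm (mm (Wop K h t m) rho) (adj (Wop K h t m))) a b = rho a b" .
qed



theorem lemma3:
  fixes K :: "real \<Rightarrow> 'm::finite \<Rightarrow> 'd::finite \<Rightarrow> 'd \<Rightarrow> complex"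
    and h :: "'m \<Rightarrow> 'm \<Rightarrow> complex"
    and rho :: "'d \<Rightarrow> 'd \<Rightarrow> complex"
    and xi :: "'d \<times> 'd \<Rightarrow> complex"
    and th0 :: real and T :: nat
  assumes diff: "\<And>t m i j. (\<lambda>s. K s m i j) differentiable (at t)"
    and kraus: "\<And>t. (\<lambda>i j. \<Sum>m\<in>UNIV. mmult UNIV (adj (K t m)) (K t m) i j) = mone"
    and HKS: "\<exists>c :: 'm \<Rightarrow> 'm \<Rightarrow> complex. \<forall>a b.
               \<i> * (\<Sum>m\<in>UNIV. mmult UNIV (adj (K th0 m)) (mderiv (\<lambda>t. K t m) th0) a b)
             = (\<Sum>i\<in>UNIV. \<Sum>j\<in>UNIV. c i j * mmult UNIV (adj (K th0 i)) (K th0 j) a b)"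
    and herm: "\<And>a b. h a b = cnj (h b a)"
    and Wgauge: "(\<lambda>a b. \<Sum>m\<in>UNIV. mmult UNIV (adj (Wop K h th0 m))
                                     (mderiv (\<lambda>t. Wop K h t m) th0) a b) = (\<lambda>a b. 0)"
    and fixed: "(\<lambda>a b. \<Sum>m\<in>UNIV. mmult UNIV (mmult UNIV (K th0 m) rho) (adj (K th0 m)) a b) = rho"
    and purif: "\<And>s s'. rho s s' = (\<Sum>a\<in>UNIV. xi (a, s) * cnj (xi (a, s')))"
    and trace1: "mtrace rho = 1"
  shows "(\<forall>th. \<forall>x\<in>carrierT T.
            PhiT K xi T th x
          = mvec (carrierT T) (mexp (carrierT T) (\<lambda>x y. \<i> * of_real th * Htot h T x y))
                 (PhiT (Wop K h) xi T th) x)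
      \<and> complex_of_real (QFI (carrierT T) (PhiT K xi T) th0)
          = 4 * (inner_c (carrierT T) (PhiT (Wop K h) xi T th0)
                   (mvec (carrierT T) (mmult (carrierT T) (Htot h T) (Htot h T)) (PhiT (Wop K h) xi T th0))
                 - (inner_c (carrierT T) (PhiT (Wop K h) xi T th0)
                   (mvec (carrierT T) (Htot h T) (PhiT (Wop K h) xi T th0)))\<^sup>2)
            + 4 * of_nat T * (\<Sum>m\<in>UNIV. mtrace (mmult UNIV (mmult UNIV (mderiv (\<lambda>t. Wop K h t m) th0) rho)
                                                   (adj (mderiv (\<lambda>t. Wop K h t m) th0))))
            + 8 * complex_of_real (Im (inner_c (carrierT T) (PhiT (Wop K h) xi T th0)
                   (mvec (carrierT T) (Htot h T) (vderiv (PhiT (Wop K h) xi T) th0))))"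
proof -
  let ?C = "carrierT T :: ('d \<times> 'd \<times> 'm list) set"
  have finC: "finite ?C" by (rule finite_carrierT)
  have conj1: "\<forall>th. \<forall>x\<in>?C. PhiT K xi T th x
          = mvec ?C (mexp ?C (\<lambda>x y. \<i> * of_real th * Htot h T x y)) (PhiT (Wop K h) xi T th) x"
    using first_conj by blast
  define W0 where "W0 = Wop K h th0"
  define D where "D = (\<lambda>m. mderiv (\<lambda>t. Wop K h t m) th0)"
  define H :: "('d \<times> 'd \<times> 'm list) \<Rightarrow> ('d \<times> 'd \<times> 'm list) \<Rightarrow> complex" where "H = Htot h T"
  define U where "U = mexp ?C (\<lambda>x y. \<i> * of_real th0 * H x y)"
  define psi where "psi = PhiT (Wop K h) xi T th0"
  define dpsi where "dpsi = (\<lambda>(a, s, ms). \<Sum>s'\<in>UNIV. wdprod W0 D ms s s' * xi (a, s'))"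
  define w where "w = (\<lambda>y. \<i> * mvec ?C H psi y + dpsi y)"
  have dW: "\<And>m i j. ((\<lambda>s. Wop K h s m i j) has_vector_derivative D m i j) (at th0)"
    unfolding D_def by (rule Wop_deriv[OF diff])
  have hdpsi: "((\<lambda>t. PhiT (Wop K h) xi T t y) has_vector_derivative dpsi y) (at th0)" if "y \<in> ?C" for y
  proof -
    obtain a s ms where y: "y = (a, s, ms)" by (cases y) auto
    have l: "length ms = T" using that y by (simp add: carrierT_def)
    have "((\<lambda>t. \<Sum>s'\<in>UNIV. wprod (Wop K h t) ms s s' * xi (a, s')) has_vector_derivative
            (\<Sum>s'\<in>UNIV. wdprod W0 D ms s s' * xi (a, s'))) (at th0)"
      unfolding W0_def by (intro has_vector_derivative_sum has_vector_derivative_mult_left wprod_deriv dW)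
    then show ?thesis by (simp add: y l PhiT_def dpsi_def)
  qed
  have vdW: "vderiv (PhiT (Wop K h) xi T) th0 y = dpsi y" if "y \<in> ?C" for y
    unfolding vderiv_def using hdpsi[OF that] by (rule vector_derivative_at)
  have psiV: "PhiT K xi T th0 x = mvec ?C U psi x" if "x \<in> ?C" for x
    using conj1 that unfolding U_def psi_def H_def by blast
  have hdV: "((\<lambda>t. PhiT K xi T t x) has_vector_derivative mvec ?C U w x) (at th0)" if x: "x \<in> ?C" for x
  proof -
    have eq: "(\<lambda>t. PhiT K xi T t x) = (\<lambda>t. \<Sum>y\<in>?C. mexp ?C (\<lambda>x y. \<i> * of_real t * H x y) x y * PhiT (Wop K h) xi T t y)"
      using conj1 x unfolding H_def mvec_def by auto
    have "((\<lambda>t. \<Sum>y\<in>?C. mexp ?C (\<lambda>x y. \<i> * of_real t * H x y) x y * PhiT (Wop K h) xi T t y) has_vector_derivative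
           (\<Sum>y\<in>?C. U x y * dpsi y + \<i> * mmult ?C U H x y * psi y)) (at th0)"
      unfolding U_def psi_def by (intro has_vector_derivative_sum has_vector_derivative_mult mexp_deriv[OF finC] hdpsi)
    moreover have "(\<Sum>y\<in>?C. U x y * dpsi y + \<i> * mmult ?C U H x y * psi y) = mvec ?C U w x"
    proof -
      have "mvec ?C U w x = \<i> * mvec ?C U (mvec ?C H psi) x + mvec ?C U dpsi x"
        unfolding w_def mvec_def by (simp add: sum.distrib sum_distrib_left algebra_simps)
      also have "mvec ?C U (mvec ?C H psi) x = mvec ?C (mmult ?C U H) psi x"
        using finC by (simp add: mvec_mvec)
      finally show ?thesis by (simp add: mvec_def sum.distrib sum_distrib_left mult_ac)
    qed
    ultimately show ?thesis using eq by simp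
  qed
  have vdV: "vderiv (PhiT K xi T) th0 x = mvec ?C U w x" if "x \<in> ?C" for x
    unfolding vderiv_def using hdV[OF that] by (rule vector_derivative_at)
  have hermH: "\<And>x y. H x y = cnj (H y x)" unfolding H_def by (rule Htot_herm[OF herm])
  have adjH: "adj H = H" by (auto intro!: ext simp: adj_def hermH[symmetric])
  have unitU: "mmult ?C (adj U) U x y = mone x y" if "x \<in> ?C" "y \<in> ?C" for x y
    unfolding U_def by (rule mexp_unitary[OF finC hermH _ that]) simp
  have I1: "inner_c ?C (vderiv (PhiT K xi T) th0) (vderiv (PhiT K xi T) th0) = inner_c ?C w w"
  proof -
    have "inner_c ?C (vderiv (PhiT K xi T) th0) (vderiv (PhiT K xi T) th0) = inner_c ?C (mvec ?C U w) (mvec ?C U w)"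
      by (intro inner_c_cong vdV)
    also have "\<dots> = inner_c ?C w w" by (rule unitary_inner[OF finC unitU])
    finally show ?thesis .
  qed
  have I2: "inner_c ?C (vderiv (PhiT K xi T) th0) (PhiT K xi T th0) = inner_c ?C w psi"
  proof -
    have "inner_c ?C (vderiv (PhiT K xi T) th0) (PhiT K xi T th0) = inner_c ?C (mvec ?C U w) (mvec ?C U psi)"
      by (intro inner_c_cong vdV psiV)
    also have "\<dots> = inner_c ?C w psi" by (rule unitary_inner[OF finC unitU])
    finally show ?thesis .
  qed
  have herm_inner: "inner_c ?C (mvec ?C H u) v = inner_c ?C u (mvec ?C H v)" for u v
    using inner_c_mvec[OF finC, of H u v] by (simp add: adjH)
  interpret P: phys W0 D rho
  proof
    show "msum UNIV (\<lambda>m. mm (adj (W0 m)) (W0 m)) = mone"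
      unfolding W0_def by (rule krausW[where K=K and t=th0, OF herm kraus])
    show "msum UNIV (\<lambda>m. mm (adj (W0 m)) (D m)) = (\<lambda>i j. 0)"
      using Wgauge unfolding W0_def D_def msum_def .
    show "msum UNIV (\<lambda>m. mm (mm (W0 m) rho) (adj (W0 m))) = rho"
      unfolding W0_def by (rule fixW[where K=K and t=th0 and rho=rho, OF herm fixed])
  qed
  have psiC: "psi y = (\<lambda>(a, s, ms). \<Sum>s'\<in>UNIV. wprod W0 ms s s' * xi (a, s')) y" if "y \<in> ?C" for y
    using that by (auto simp: psi_def PhiT_def W0_def carrierT_def)
  have dd: "inner_c ?C dpsi dpsi = of_nat T * P.alpha"
    unfolding dpsi_def conn[OF purif] using P.Cn[of T] unfolding P.Cn_def .
  have dp: "inner_c ?C dpsi psi = 0"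
  proof -
    have "inner_c ?C dpsi psi = inner_c ?C dpsi (\<lambda>(a, s, ms). \<Sum>s'\<in>UNIV. wprod W0 ms s s' * xi (a, s'))"
      by (intro inner_c_cong psiC) auto
    also have "\<dots> = 0" unfolding dpsi_def conn[OF purif] P.Bn_adj by (simp add: mtrace_def mmult_def)
    finally show ?thesis .
  qed
  define z where "z = inner_c ?C psi (mvec ?C H dpsi)"
  define hH where "hH = inner_c ?C psi (mvec ?C H psi)"
  define a1 where "a1 = inner_c ?C psi (mvec ?C (mmult ?C H H) psi)"
  have a1': "inner_c ?C (mvec ?C H psi) (mvec ?C H psi) = a1"
    unfolding a1_def herm_inner using finC by (simp add: mvec_mvec)
  have X: "inner_c ?C w w = a1 + of_nat T * P.alpha + \<i> * cnj z - \<i> * z"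
  proof -
    have e1: "inner_c ?C dpsi (mvec ?C H psi) = cnj (inner_c ?C (mvec ?C H psi) dpsi)"
      by (simp add: inner_c_cnj)
    have e2: "inner_c ?C (mvec ?C H psi) dpsi = z" unfolding z_def by (rule herm_inner)
    have "inner_c ?C w w = inner_c ?C (mvec ?C H psi) (mvec ?C H psi) + inner_c ?C dpsi dpsi
          + \<i> * inner_c ?C dpsi (mvec ?C H psi) - \<i> * inner_c ?C (mvec ?C H psi) dpsi"
      unfolding w_def by (rule inner_expand)
    then show ?thesis by (simp only: e1 e2 a1' dd)
  qed
  have Y: "inner_c ?C w psi = - \<i> * hH"
    unfolding w_def inner_expand2 dp hH_def herm_inner by simp
  have a1r: "Im a1 = 0" using inner_c_self_real[of ?C "mvec ?C H psi"] by (simp add: a1')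
  have ddr: "Im (of_nat T * P.alpha) = 0" using inner_c_self_real[of ?C dpsi] by (simp add: dd)
  have hHr: "Im hH = 0"
  proof -
    have "cnj hH = hH" unfolding hH_def inner_c_cnj herm_inner ..
    then have "Im (cnj hH) = Im hH" by simp
    then show ?thesis by simp
  qed
  have zW: "inner_c ?C psi (mvec ?C H (vderiv (PhiT (Wop K h) xi T) th0)) = z"
    unfolding z_def by (intro inner_c_cong refl mvec_cong vdW)
  have alpha: "(\<Sum>m\<in>UNIV. mtrace (mmult UNIV (mmult UNIV (mderiv (\<lambda>t. Wop K h t m) th0) rho)
                  (adj (mderiv (\<lambda>t. Wop K h t m) th0)))) = P.alpha"
    unfolding P.alpha_def by (simp add: D_def)
  have cm: "(cmod (- \<i> * hH))\<^sup>2 = (Re hH)\<^sup>2" using hHr by (simp add: norm_mult cmod_power2)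
  have main2: "complex_of_real (QFI ?C (PhiT K xi T) th0) = 4 * (a1 - hH\<^sup>2) + 4 * of_nat T * P.alpha + 8 * complex_of_real (Im z)"
    unfolding QFI_def I1 I2 X Y cm
    using a1r ddr hHr by (simp add: complex_eq_iff power2_eq_square cmod_power2 algebra_simps)
  show ?thesis
    using conj1 main2 zW alpha unfolding a1_def hH_def psi_def H_def by simp
qed


end
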